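(* Let $n$ be a positive integer. Then, as $m\to\infty$ through the positive integers, \[ \sum_{k = 1}^{m} (-1)^{k-1} \binom{m}{k} \frac{1}{k^{n}} = \frac{\log^{n}{m}}{n!} + \frac{\gamma\log^{n-1}{m}}{(n-1)!} + O(\log^{n-2}{m}). \]
   Context: $\gamma$ is the Euler--Mascheroni constant. *)

theory Defs
  imports "HOL-Analysis.Analysis" "HOL-Library.Landau_Symbols"
begin

end

theory Submission
  imports Defs
begin

definition A :: "nat \<Rightarrow> nat \<Rightarrow> real" where
  "A n m = (\<Sum>k=1..m. (-1) ^ (k - 1) * real (m choose k) / real k ^ n)"

lemma sum_shift1: "(\<Sum>k=1..m. f k) = (\<Sum>i<m. f (Suc i))"
  by (induction m) (simp_all add: atLeastAtMostSuc_conv add.commute)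

lemma A_alt: "A n m = (\<Sum>i<m. (-1) ^ i * real (m choose Suc i) / real (Suc i) ^ n)"
  unfolding A_def sum_shift1 by simp

lemma A0: assumes "m \<ge> 1" shows "A 0 m = 1"
proof -
  have "(\<Sum>i\<le>m. (-1)^i * real (m choose i)) = 0"
    using choose_alternating_sum[of m] assms by simp
  also have "(\<Sum>i\<le>m. (-1)^i * real (m choose i)) = 1 + (\<Sum>i<m. (-1)^Suc i * real (m choose Suc i))"
    by (subst sum.atMost_shift) simp
  finally have "(\<Sum>i<m. (-1)^i * real (m choose Suc i)) = 1"
    by (simp add: sum_negf)
  thus ?thesis by (simp add: A_alt)
qed

lemma A_Suc_Suc: "A (Suc n) (Suc m) = A (Suc n) m + A n (Suc m) / real (Suc m)"
proof -
  have key: "real (m choose i) / real (Suc i) ^ Suc n = real (Suc m choose Suc i) / real (Suc i) ^ n / real (Suc m)" for i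
  proof -
    have "real (Suc i) * real (Suc m choose Suc i) = real (Suc m) * real (m choose i)"
      using Suc_times_binomial[of i m] by (metis of_nat_mult)
    thus ?thesis by (simp add: field_simps del: of_nat_Suc binomial_Suc_Suc)
  qed
  have "A (Suc n) (Suc m) = (\<Sum>i<Suc m. (-1) ^ i * real (m choose Suc i) / real (Suc i) ^ Suc n)
      + (\<Sum>i<Suc m. (-1) ^ i * (real (m choose i) / real (Suc i) ^ Suc n))"
    by (simp add: A_alt add_divide_distrib distrib_left sum.distrib del: sum.lessThan_Suc)
  also have "(\<Sum>i<Suc m. (-1) ^ i * real (m choose Suc i) / real (Suc i) ^ Suc n) = A (Suc n) m"
    by (simp add: A_alt)
  also have "(\<Sum>i<Suc m. (-1) ^ i * (real (m choose i) / real (Suc i) ^ Suc n)) = A n (Suc m) / real (Suc m)"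
    unfolding key A_alt by (simp add: sum_divide_distrib del: sum.lessThan_Suc of_nat_Suc binomial_Suc_Suc)
  finally show ?thesis .
qed

lemma A1: "A 1 m = harm m"
proof (induction m)
  case 0 then show ?case by (simp add: A_def harm_def)
next
  case (Suc m)
  have "A 1 (Suc m) = A 1 m + A 0 (Suc m) / real (Suc m)"
    using A_Suc_Suc[of 0 m] by simp
  also have "\<dots> = harm (Suc m)" using Suc A0[of "Suc m"] by (simp add: harm_Suc field_simps)
  finally show ?case .
qed

definition G :: "real \<Rightarrow> real \<Rightarrow> nat \<Rightarrow> real" where
  "G a b n = real (Suc n) * (b - a) * b ^ n - (b ^ Suc n - a ^ Suc n)"

lemma pow_diff_bounds:
  fixes a b :: real assumes "0 \<le> a" "a \<le> b"
  shows "0 \<le> b ^ Suc n - a ^ Suc n \<and> b ^ Suc n - a ^ Suc n \<le> real (Suc n) * (b - a) * b ^ n"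
proof (induction n)
  case 0 then show ?case using assms by simp
next
  case (Suc n)
  have eq: "b ^ Suc (Suc n) - a ^ Suc (Suc n) = b * (b ^ Suc n - a ^ Suc n) + a ^ Suc n * (b - a)"
    by (simp add: algebra_simps)
  have an: "a ^ Suc n \<le> b ^ Suc n" by (rule power_mono) (use assms in auto)
  have b0: "0 \<le> b" using assms by simp
  have 1: "b * (b ^ Suc n - a ^ Suc n) \<le> b * (real (Suc n) * (b - a) * b ^ n)"
    using Suc b0 by (intro mult_left_mono) auto
  have 2: "a ^ Suc n * (b - a) \<le> b ^ Suc n * (b - a)"
    using an assms by (intro mult_right_mono) auto
  have "b ^ Suc (Suc n) - a ^ Suc (Suc n) \<le> b * (real (Suc n) * (b - a) * b ^ n) + b ^ Suc n * (b - a)"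
    using eq 1 2 by linarith
  also have "\<dots> = real (Suc (Suc n)) * (b - a) * b ^ Suc n" by (simp add: algebra_simps)
  finally show ?case using Suc eq an assms b0
    by (simp add: mult_nonneg_nonneg)
qed

lemma G_rec: "G a b (Suc n) = b * G a b n + (b - a) * (b ^ Suc n - a ^ Suc n)"
  unfolding G_def by (simp add: algebra_simps)

lemma G_bounds:
  fixes a b :: real assumes "0 \<le> a" "a \<le> b"
  shows "0 \<le> G a b n \<and> G a b (Suc n) \<le> real (Suc (Suc n))^2 * (b - a)^2 * b ^ n"
proof (induction n)
  case 0
  have "G a b 1 = (b - a)^2" by (simp add: G_def power2_eq_square algebra_simps)
  then show ?case using assms by (simp add: G_def)
next
  case (Suc n)
  note pd = pow_diff_bounds[OF assms, of n]
  have b0: "0 \<le> b" using assms by simp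
  have d0: "0 \<le> b - a" using assms by simp
  have g1: "0 \<le> G a b (Suc n)" unfolding G_rec using Suc pd b0 d0 by (simp add: mult_nonneg_nonneg)
  note pd2 = pow_diff_bounds[OF assms, of "Suc n"]
  have "G a b (Suc (Suc n)) = b * G a b (Suc n) + (b - a) * (b ^ Suc (Suc n) - a ^ Suc (Suc n))"
    by (rule G_rec)
  also have "\<dots> \<le> b * (real (Suc (Suc n))^2 * (b - a)^2 * b ^ n) + (b - a) * (real (Suc (Suc n)) * (b - a) * b ^ Suc n)"
    using Suc pd2 b0 d0 by (intro add_mono mult_left_mono) auto
  also have "\<dots> = (real (Suc (Suc n))^2 + real (Suc (Suc n))) * (b - a)^2 * b ^ Suc n"
    by (simp add: algebra_simps power2_eq_square)
  also have "\<dots> \<le> real (Suc (Suc (Suc n)))^2 * ((b - a)^2 * b ^ Suc n)"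
  proof -
    have "0 \<le> (b - a)^2 * b ^ Suc n" using b0 by simp
    moreover have "real (Suc (Suc n))^2 + real (Suc (Suc n)) \<le> real (Suc (Suc (Suc n)))^2"
      by (simp add: power2_eq_square algebra_simps)
    ultimately show ?thesis unfolding mult.assoc by (rule mult_right_mono[rotated])
  qed
  finally show ?case using g1 by simp
qed

lemma G_bound': 
  fixes a b :: real assumes "0 \<le> a" "a \<le> b"
  shows "G a b n \<le> real (Suc n)^2 * (b - a)^2 * b ^ (n - 1)"
proof (cases n)
  case 0 then show ?thesis by (simp add: G_def)
next
  case (Suc k) then show ?thesis using G_bounds[OF assms, of k] by simp
qed

lemma abs_pow_diff:
  fixes x y M :: real assumes "0 \<le> x" "0 \<le> y" "x \<le> M" "y \<le> M"
  shows "\<bar>x ^ n - y ^ n\<bar> \<le> real n * \<bar>x - y\<bar> * M ^ (n - 1)"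
proof (cases n)
  case 0 then show ?thesis by simp
next
  case (Suc k)
  have "\<bar>x ^ Suc k - y ^ Suc k\<bar> \<le> real (Suc k) * \<bar>x - y\<bar> * (max x y) ^ k"
  proof (cases "x \<le> y")
    case True then show ?thesis using pow_diff_bounds[of x y k] assms by (simp add: max_def)
  next
    case False then show ?thesis using pow_diff_bounds[of y x k] assms by (simp add: max_def abs_minus_commute)
  qed
  also have "\<dots> \<le> real (Suc k) * \<bar>x - y\<bar> * M ^ k"
    using assms by (intro mult_left_mono power_mono) auto
  finally show ?thesis using Suc by simp
qed

definition D :: "nat \<Rightarrow> nat \<Rightarrow> real" where
  "D n m = A n m - harm m ^ n / fact n"

lemma harm_Suc_diff: "harm (Suc m) - harm m = (1::real) / real (Suc m)"
  by (simp add: harm_Suc inverse_eq_divide)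

lemma D_step: "D (Suc n) (Suc m) = D (Suc n) m + D n (Suc m) / real (Suc m)
   + G (harm m) (harm (Suc m)) n / fact (Suc n)"
proof -
  have d: "harm (Suc m) - harm m = (1::real) / real (Suc m)" by (rule harm_Suc_diff)
  have e0: "real (Suc n) * (1 / real (Suc m)) * harm (Suc m) ^ n / fact (Suc n)
      = harm (Suc m) ^ n / fact n / real (Suc m)"
    by (simp add: fact_Suc field_simps del: of_nat_Suc)
  have e1: "G (harm m) (harm (Suc m)) n / fact (Suc n) =
      harm (Suc m) ^ n / fact n / real (Suc m) - harm (Suc m) ^ Suc n / fact (Suc n) + harm m ^ Suc n / fact (Suc n)"
    unfolding G_def d e0[symmetric] by (simp add: diff_divide_distrib add_divide_distrib)
  have e2: "D n (Suc m) / real (Suc m) = A n (Suc m) / real (Suc m) - harm (Suc m) ^ n / fact n / real (Suc m)"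
    by (simp add: D_def diff_divide_distrib)
  show ?thesis unfolding e1 e2 unfolding D_def A_Suc_Suc by simp
qed

lemma D_sum: "D (Suc n) m = (\<Sum>j=1..m. D n j / real j + G (harm (j - 1)) (harm j) n / fact (Suc n))"
proof (induction m)
  case 0 then show ?case by (simp add: D_def A_def harm_def)
next
  case (Suc m)
  then show ?case by (simp add: D_step)
qed

lemma inv_sq_sum: "m \<ge> 1 \<Longrightarrow> (\<Sum>j=1..m. 1 / real j ^ 2) \<le> 2 - 1 / real m"
proof (induction m rule: nat_induct_at_least)
  case base then show ?case by simp
next
  case (Suc m)
  have "1 / real (Suc m) ^ 2 \<le> 1 / (real m * real (Suc m))"
    using Suc.hyps by (intro divide_left_mono) (auto simp: power2_eq_square intro!: mult_right_mono mult_pos_pos)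
  also have "1 / (real m * real (Suc m)) = 1 / real m - 1 / real (Suc m)"
    using Suc.hyps by (simp add: field_simps)
  finally have "1 / real (Suc m) ^ 2 \<le> 1 / real m - 1 / real (Suc m)" .
  then show ?case using Suc.IH by simp
qed

lemma inv_sq_sum2: "(\<Sum>j=1..m. 1 / real j ^ 2) \<le> 2"
proof (cases "m \<ge> 1")
  case True then show ?thesis using inv_sq_sum[of m] by (smt (verit) divide_nonneg_nonneg of_nat_0_le_iff)
next
  case False then show ?thesis by simp
qed

lemma abs_add_nonneg: "0 \<le> (y::real) \<Longrightarrow> \<bar>x + y\<bar> \<le> \<bar>x\<bar> + y"
  by linarith

lemma div_rearr: "(a::real) * b * c / f = a / f * b * c"
  by simp

lemma D_step_bound:
  assumes C: "C \<ge> 0" and hyp: "\<And>j. j \<ge> 1 \<Longrightarrow> \<bar>D n j\<bar> \<le> C * harm j ^ k"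
  shows "\<bar>D (Suc n) m\<bar> \<le> C * harm m ^ Suc k + 2 * (real (Suc n)^2 / fact (Suc n)) * harm m ^ (n - 1)"
proof -
  define K where "K = real (Suc n)^2 / fact (Suc n)"
  have K0: "K \<ge> 0" by (simp add: K_def)
  have Hm0: "(0::real) \<le> harm m" by (rule harm_nonneg)
  have trm: "\<bar>D n j / real j + G (harm (j - 1)) (harm j) n / fact (Suc n)\<bar>
        \<le> C * harm m ^ k * (1 / real j) + K * harm m ^ (n - 1) * (1 / real j ^ 2)"
    if j: "j \<in> {1..m}" for j
  proof -
    from j have j1: "j \<ge> 1" and jm: "j \<le> m" by auto
    have hj: "(harm j :: real) = harm (j - 1) + 1 / real j"
      using harm_Suc_diff[of "j - 1"] j1 by simp
    have a0: "(0::real) \<le> harm (j - 1)" by (rule harm_nonneg)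
    have ab: "harm (j - 1) \<le> (harm j :: real)" using hj by simp
    have Gb: "0 \<le> G (harm (j - 1)) (harm j) n"
      and Gu: "G (harm (j - 1)) (harm j) n \<le> real (Suc n)^2 * (1 / real j)^2 * harm j ^ (n - 1)"
      using G_bounds[OF a0 ab, of n] G_bound'[OF a0 ab, of n] hj by auto
    have "harm j ^ (n - 1) \<le> (harm m :: real) ^ (n - 1)"
      by (intro power_mono harm_mono jm harm_nonneg)
    hence "real (Suc n)^2 * (1 / real j)^2 * harm j ^ (n - 1) \<le> real (Suc n)^2 * (1 / real j)^2 * harm m ^ (n - 1)"
      by (intro mult_left_mono) auto
    also have "\<dots> = real (Suc n)^2 * harm m ^ (n - 1) * (1 / real j ^ 2)"
      by (simp add: power_divide)
    finally have "G (harm (j - 1)) (harm j) n \<le> real (Suc n)^2 * harm m ^ (n - 1) * (1 / real j ^ 2)"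
      using Gu by linarith
    hence "G (harm (j - 1)) (harm j) n / fact (Suc n) \<le> real (Suc n)^2 * harm m ^ (n - 1) * (1 / real j ^ 2) / fact (Suc n)"
      by (intro divide_right_mono) auto
    moreover have "real (Suc n)^2 * harm m ^ (n - 1) * (1 / real j ^ 2) / fact (Suc n) = K * harm m ^ (n - 1) * (1 / real j ^ 2)"
      unfolding K_def by (rule div_rearr)
    ultimately have Gu2: "G (harm (j - 1)) (harm j) n / fact (Suc n) \<le> K * harm m ^ (n - 1) * (1 / real j ^ 2)"
      by (rule ord_le_eq_trans)
    have "harm j ^ k \<le> (harm m :: real) ^ k"
      by (intro power_mono harm_mono jm harm_nonneg)
    hence "\<bar>D n j\<bar> \<le> C * harm m ^ k" using hyp[OF j1] C by (meson mult_left_mono order_trans)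
    hence "\<bar>D n j\<bar> * (1 / real j) \<le> C * harm m ^ k * (1 / real j)"
      by (rule mult_right_mono) simp
    moreover have "\<bar>D n j / real j\<bar> = \<bar>D n j\<bar> * (1 / real j)"
      by (simp add: abs_divide)
    ultimately have Db: "\<bar>D n j / real j\<bar> \<le> C * harm m ^ k * (1 / real j)" by simp
    have "0 \<le> G (harm (j - 1)) (harm j) n / fact (Suc n)" using Gb by simp
    hence "\<bar>D n j / real j + G (harm (j - 1)) (harm j) n / fact (Suc n)\<bar>
       \<le> \<bar>D n j / real j\<bar> + G (harm (j - 1)) (harm j) n / fact (Suc n)"
      by (rule abs_add_nonneg)
    then show ?thesis using Db Gu2 by linarith
  qed
  have "\<bar>D (Suc n) m\<bar> \<le> (\<Sum>j=1..m. \<bar>D n j / real j + G (harm (j - 1)) (harm j) n / fact (Suc n)\<bar>)"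
    unfolding D_sum by (rule sum_abs)
  also have "\<dots> \<le> (\<Sum>j=1..m. C * harm m ^ k * (1 / real j) + K * harm m ^ (n - 1) * (1 / real j ^ 2))"
    by (rule sum_mono) (rule trm)
  also have "\<dots> = C * harm m ^ k * harm m + K * harm m ^ (n - 1) * (\<Sum>j=1..m. 1 / real j ^ 2)"
    by (simp add: sum.distrib sum_distrib_left harm_def inverse_eq_divide)
  also have "\<dots> \<le> C * harm m ^ k * harm m + K * harm m ^ (n - 1) * 2"
    using K0 Hm0 inv_sq_sum2[of m] by (intro add_left_mono mult_left_mono) auto
  finally show ?thesis by (simp add: K_def mult_ac)
qed

lemma D_zero: "n \<le> 1 \<Longrightarrow> m \<ge> 1 \<Longrightarrow> D n m = 0"
  using A1[of m] A0[of m] by (cases "m = 0"; auto simp: D_def le_Suc_eq A_def)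

lemma D_bound: assumes "n \<ge> 2" shows "\<exists>C\<ge>0. \<forall>m\<ge>1. \<bar>D n m\<bar> \<le> C * harm m ^ (n - 2)"
  using assms
proof (induction n rule: nat_induct_at_least)
  case base
  have "\<bar>D (Suc 1) m\<bar> \<le> 0 * harm m ^ Suc 0 + 2 * (real (Suc 1)^2 / fact (Suc 1)) * harm m ^ (1 - 1)" for m
    by (rule D_step_bound) (simp_all add: D_zero)
  then show ?case by (intro exI[of _ "2 * (real (Suc 1)^2 / fact (Suc 1))"]) (auto simp: numeral_2_eq_2)
next
  case (Suc n)
  then obtain C where C: "C \<ge> 0" "\<And>m. m \<ge> 1 \<Longrightarrow> \<bar>D n m\<bar> \<le> C * harm m ^ (n - 2)" by blast
  define K where "K = 2 * (real (Suc n)^2 / fact (Suc n))"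
  have K0: "K \<ge> 0" by (simp add: K_def)
  have "\<bar>D (Suc n) m\<bar> \<le> (C + K) * harm m ^ (Suc n - 2)" if "m \<ge> 1" for m
  proof -
    have "\<bar>D (Suc n) m\<bar> \<le> C * harm m ^ Suc (n - 2) + K * harm m ^ (n - 1)"
      unfolding K_def by (rule D_step_bound[OF C(1) C(2)])
    moreover have "Suc (n - 2) = Suc n - 2" "n - 1 = Suc n - 2" using Suc.hyps by auto
    ultimately show ?thesis by (simp add: algebra_simps)
  qed
  then show ?case using C K0 by (intro exI[of _ "C + K"]) auto
qed

lemma harm_approx: assumes "m \<ge> 1"
  shows "\<bar>harm m - ln (real m) - euler_mascheroni\<bar> \<le> 1 / real m"
proof -
  from euler_mascheroni_bounds[OF assms]
  have b1: "euler_mascheroni \<ge> harm m - ln (real (Suc m)) + inverse (real (2 * (m + 1)))"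
    and b2: "euler_mascheroni \<le> harm m - ln (real (Suc m)) + inverse (real (2 * m))" by auto
  have m0: "real m > 0" using assms by simp
  have l: "ln (real (Suc m)) - ln (real m) = ln (1 + 1 / real m)"
  proof -
    have "1 + 1 / real m = real (Suc m) / real m" using m0 by (simp add: field_simps)
    moreover have "ln (real (Suc m) / real m) = ln (real (Suc m)) - ln (real m)"
      using m0 by (intro ln_divide_pos) auto
    ultimately show ?thesis by simp
  qed
  have l1: "ln (1 + 1 / real m) \<le> 1 / real m" by (rule ln_add_one_self_le_self) simp
  have l0: "0 \<le> ln (1 + 1 / real m)" using m0 by simp
  have i1: "0 \<le> inverse (real (2 * (m + 1)))" by simp
  have i2: "inverse (real (2 * m)) \<le> 1 / real m" using m0 by (simp add: field_simps)
  show ?thesis unfolding abs_le_iff using b1 b2 l l1 l0 i1 i2 by linarith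
qed

lemma binom2_bound:
  fixes L c :: real assumes "0 \<le> L" "0 \<le> c"
  shows "\<bar>(L + c) ^ Suc (Suc k) - L ^ Suc (Suc k) - real (Suc (Suc k)) * c * L ^ Suc k\<bar>
     \<le> 2 * real (Suc (Suc k))^2 * c^2 * (L + c) ^ k"
proof -
  have ab: "L \<le> L + c" using assms by simp
  have eq: "(L + c) ^ Suc (Suc k) - L ^ Suc (Suc k) - real (Suc (Suc k)) * c * L ^ Suc k
      = - G L (L + c) (Suc k) + real (Suc (Suc k)) * c * ((L + c) ^ Suc k - L ^ Suc k)"
    unfolding G_def by (simp add: algebra_simps)
  have g: "0 \<le> G L (L + c) (Suc k)" "G L (L + c) (Suc k) \<le> real (Suc (Suc k))^2 * c^2 * (L + c) ^ k"
    using G_bounds[OF assms(1) ab, of k] G_bounds[OF assms(1) ab, of "Suc k"] by auto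
  note p = pow_diff_bounds[OF assms(1) ab, of k]
  have p2: "real (Suc (Suc k)) * c * ((L + c) ^ Suc k - L ^ Suc k)
      \<le> real (Suc (Suc k)) * c * (real (Suc k) * c * (L + c) ^ k)"
    using p assms by (intro mult_left_mono) auto
  have p3: "real (Suc (Suc k)) * c * (real (Suc k) * c * (L + c) ^ k) \<le> real (Suc (Suc k))^2 * c^2 * (L + c) ^ k"
  proof -
    have "real (Suc (Suc k)) * real (Suc k) \<le> real (Suc (Suc k))^2" by (simp add: power2_eq_square)
    hence "real (Suc (Suc k)) * real (Suc k) * (c^2 * (L + c) ^ k) \<le> real (Suc (Suc k))^2 * (c^2 * (L + c) ^ k)"
      using assms by (intro mult_right_mono) auto
    thus ?thesis by (simp add: power2_eq_square mult_ac)
  qed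
  have p0: "0 \<le> real (Suc (Suc k)) * c * ((L + c) ^ Suc k - L ^ Suc k)"
    using p assms by simp
  have "\<bar>- G L (L + c) (Suc k) + real (Suc (Suc k)) * c * ((L + c) ^ Suc k - L ^ Suc k)\<bar>
      \<le> G L (L + c) (Suc k) + real (Suc (Suc k)) * c * ((L + c) ^ Suc k - L ^ Suc k)"
    using g p0 by linarith
  also have "\<dots> \<le> real (Suc (Suc k))^2 * c^2 * (L + c) ^ k + real (Suc (Suc k))^2 * c^2 * (L + c) ^ k"
    using g p2 p3 by linarith
  also have "\<dots> = 2 * real (Suc (Suc k))^2 * c^2 * (L + c) ^ k" by simp
  finally show ?thesis unfolding eq .
qed

lemma ln_ge1: "m \<ge> 3 \<Longrightarrow> 1 \<le> ln (real m)"
proof -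
  assume "m \<ge> 3"
  hence "exp 1 \<le> real m" using exp_le by linarith
  hence "ln (exp 1) \<le> ln (real m)" using \<open>m \<ge> 3\<close> by (subst ln_le_cancel_iff) auto
  thus ?thesis by simp
qed

lemma abs3: "\<bar>(a::real) + b + c\<bar> \<le> \<bar>a\<bar> + \<bar>b\<bar> + \<bar>c\<bar>"
  by linarith

lemma main_bound:
  fixes k :: nat
  defines "N \<equiv> Suc (Suc k)"
  shows "\<exists>K. \<forall>m\<ge>3. \<bar>A N m - (ln (real m) ^ N / fact N + euler_mascheroni * ln (real m) ^ Suc k / fact (Suc k))\<bar>
            \<le> K * ln (real m) ^ k"
proof -
  obtain C where C0: "C \<ge> 0" and C: "\<And>m. m \<ge> 1 \<Longrightarrow> \<bar>D N m\<bar> \<le> C * harm m ^ (N - 2)"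
    using D_bound[of N] unfolding N_def by auto
  define K where "K = C * 3 ^ k + real N * 3 ^ Suc k + 2 * real N ^ 2 * 2 ^ k"
  have "\<bar>A N m - (ln (real m) ^ N / fact N + euler_mascheroni * ln (real m) ^ Suc k / fact (Suc k))\<bar>
            \<le> K * ln (real m) ^ k" if m3: "m \<ge> 3" for m
  proof -
    define L where "L = ln (real m)"
    define H where "H = (harm m :: real)"
    define g where "g = (euler_mascheroni :: real)"
    define v where "v = L + g"
    have L1: "1 \<le> L" unfolding L_def using m3 by (rule ln_ge1)
    have Lm: "L \<le> real m" unfolding L_def using m3 by (intro less_imp_le ln_less_self) auto
    have g0: "0 < g" unfolding g_def by (rule euler_mascheroni_pos)
    have g1: "g < 1" unfolding g_def using euler_mascheroni_less_13_over_22 by simp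
    have hE: "\<bar>H - v\<bar> \<le> 1 / real m" unfolding H_def v_def L_def g_def
      using harm_approx[of m] m3 by (simp add: algebra_simps)
    have im: "1 / real m \<le> 1" using m3 by simp
    have H0: "0 \<le> H" unfolding H_def by (rule harm_nonneg)
    have H3: "H \<le> 3 * L" using hE im L1 g1 unfolding v_def unfolding abs_le_iff by linarith
    have v0: "0 \<le> v" using L1 g0 unfolding v_def by simp
    have v3: "v \<le> 3 * L" using L1 g1 unfolding v_def by simp
    have v2: "v \<le> 2 * L" using L1 g1 unfolding v_def by simp
    have fN: "fact N = real N * fact (Suc k)" unfolding N_def by (simp add: fact_Suc)
    have fN1: "(1::real) \<le> fact N" by (rule fact_ge_1)
    have eq: "A N m - (L ^ N / fact N + g * L ^ Suc k / fact (Suc k))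
        = D N m + (H ^ N - v ^ N) / fact N + (v ^ N - L ^ N - real N * g * L ^ Suc k) / fact N"
    proof -
      have "g * L ^ Suc k / fact (Suc k) = real N * g * L ^ Suc k / fact N"
        unfolding fN by (simp add: N_def)
      thus ?thesis unfolding D_def H_def by (simp add: diff_divide_distrib add_divide_distrib)
    qed
    have t1: "\<bar>D N m\<bar> \<le> C * 3 ^ k * L ^ k"
    proof -
      have "\<bar>D N m\<bar> \<le> C * H ^ k" using C[of m] m3 unfolding H_def N_def by simp
      also have "H ^ k \<le> (3 * L) ^ k" using H3 H0 by (rule power_mono)
      hence "C * H ^ k \<le> C * (3 * L) ^ k" using C0 by (rule mult_left_mono)
      finally show ?thesis by (simp add: power_mult_distrib mult_ac)
    qed
    have t2: "\<bar>H ^ N - v ^ N\<bar> \<le> real N * 3 ^ Suc k * L ^ k"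
    proof -
      have "\<bar>H ^ N - v ^ N\<bar> \<le> real N * \<bar>H - v\<bar> * (3 * L) ^ (N - 1)"
        using H0 v0 H3 v3 by (rule abs_pow_diff)
      also have "\<dots> \<le> real N * (1 / real m) * (3 * L) ^ (N - 1)"
        using hE L1 by (intro mult_right_mono mult_left_mono) auto
      also have "\<dots> = real N * 3 ^ Suc k * L ^ k * (L / real m)"
        unfolding N_def by (simp add: power_mult_distrib)
      also have "\<dots> \<le> real N * 3 ^ Suc k * L ^ k * 1"
        using Lm L1 m3 by (intro mult_left_mono) auto
      finally show ?thesis by simp
    qed
    have t3: "\<bar>v ^ N - L ^ N - real N * g * L ^ Suc k\<bar> \<le> 2 * real N ^ 2 * 2 ^ k * L ^ k"
    proof -
      have "\<bar>v ^ N - L ^ N - real N * g * L ^ Suc k\<bar> \<le> 2 * real N ^ 2 * g ^ 2 * v ^ k"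
        unfolding v_def N_def using L1 g0 by (intro binom2_bound) auto
      also have "\<dots> \<le> 2 * real N ^ 2 * 1 * (2 * L) ^ k"
        using g0 g1 v0 v2 by (intro mult_left_mono mult_mono power_mono) (auto simp: power_le_one)
      finally show ?thesis by (simp add: power_mult_distrib mult_ac)
    qed
    have d2: "\<bar>(H ^ N - v ^ N) / fact N\<bar> \<le> \<bar>H ^ N - v ^ N\<bar>"
      using fN1 by (simp add: abs_divide divide_le_eq) (simp add: mult_le_cancel_left1 mult_left_mono[of 1])
    have d3: "\<bar>(v ^ N - L ^ N - real N * g * L ^ Suc k) / fact N\<bar> \<le> \<bar>v ^ N - L ^ N - real N * g * L ^ Suc k\<bar>"
      using fN1 by (simp add: abs_divide divide_le_eq) (simp add: mult_le_cancel_left1 mult_left_mono[of 1])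
    have "\<bar>A N m - (L ^ N / fact N + g * L ^ Suc k / fact (Suc k))\<bar> \<le> K * L ^ k"
    proof -
      have KL: "K * L ^ k = C * 3 ^ k * L ^ k + real N * 3 ^ Suc k * L ^ k + 2 * real N ^ 2 * 2 ^ k * L ^ k"
        by (simp add: K_def algebra_simps)
      show ?thesis unfolding eq KL using abs3[of "D N m" "(H ^ N - v ^ N) / fact N" "(v ^ N - L ^ N - real N * g * L ^ Suc k) / fact N"]
        t1 t2 t3 d2 d3 by linarith
    qed
    thus ?thesis unfolding L_def g_def .
  qed
  thus ?thesis by blast
qed

theorem corollary1:
  fixes n :: nat
  assumes "n \<ge> 1"
  shows "(\<lambda>m::nat. (\<Sum>k=1..m. (-1) ^ (k - 1) * real (m choose k) / real k ^ n)
            - (ln (real m) ^ n / fact n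
               + euler_mascheroni * ln (real m) ^ (n - 1) / fact (n - 1)))
         \<in> O(\<lambda>m::nat. ln (real m) powr (real n - 2))"
proof -
  have fA: "(\<Sum>k=1..m. (-1) ^ (k - 1) * real (m choose k) / real k ^ n) = A n m" for m
    by (simp add: A_def)
  show ?thesis unfolding fA
  proof (cases "n = 1")
    case True
    have "\<forall>m\<ge>3. norm (A n m - (ln (real m) ^ n / fact n
               + euler_mascheroni * ln (real m) ^ (n - 1) / fact (n - 1)))
          \<le> 1 * norm (ln (real m) powr (real n - 2))"
    proof (intro allI impI)
      fix m :: nat assume m3: "m \<ge> 3"
      have L1: "1 \<le> ln (real m)" using m3 by (rule ln_ge1)
      have Lm: "ln (real m) \<le> real m" using m3 by (intro less_imp_le ln_less_self) auto
      have "\<bar>harm m - ln (real m) - euler_mascheroni\<bar> \<le> 1 / real m"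
        using harm_approx[of m] m3 by simp
      also have "1 / real m \<le> 1 / ln (real m)"
        using L1 Lm m3 by (intro divide_left_mono mult_pos_pos) auto
      finally show "norm (A n m - (ln (real m) ^ n / fact n
               + euler_mascheroni * ln (real m) ^ (n - 1) / fact (n - 1)))
          \<le> 1 * norm (ln (real m) powr (real n - 2))"
        using True L1 using A1[of m] by (simp add: powr_neg_one algebra_simps)
    qed
    thus "(\<lambda>m. A n m - (ln (real m) ^ n / fact n
               + euler_mascheroni * ln (real m) ^ (n - 1) / fact (n - 1)))
         \<in> O(\<lambda>m::nat. ln (real m) powr (real n - 2))"
      by (intro bigoI[where c=1]) (unfold eventually_at_top_linorder, blast)
  next
    case False
    define k where "k = n - 2"
    have nk: "n = Suc (Suc k)" using assms False unfolding k_def by simp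
    obtain K where K: "\<And>m. m \<ge> 3 \<Longrightarrow> \<bar>A n m - (ln (real m) ^ n / fact n
          + euler_mascheroni * ln (real m) ^ Suc k / fact (Suc k))\<bar> \<le> K * ln (real m) ^ k"
      using main_bound[of k] unfolding nk by blast
    have "\<forall>m\<ge>3. norm (A n m - (ln (real m) ^ n / fact n
               + euler_mascheroni * ln (real m) ^ (n - 1) / fact (n - 1)))
          \<le> K * norm (ln (real m) powr (real n - 2))"
    proof (intro allI impI)
      fix m :: nat assume m3: "m \<ge> 3"
      have L1: "1 \<le> ln (real m)" using m3 by (rule ln_ge1)
      have "ln (real m) powr (real n - 2) = ln (real m) powr (real k)" unfolding nk by simp
      also have "\<dots> = ln (real m) ^ k" using L1 by (intro powr_realpow) auto
      finally have p: "norm (ln (real m) powr (real n - 2)) = ln (real m) ^ k" using L1 by simp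
      show "norm (A n m - (ln (real m) ^ n / fact n
               + euler_mascheroni * ln (real m) ^ (n - 1) / fact (n - 1)))
          \<le> K * norm (ln (real m) powr (real n - 2))"
        unfolding p using K[OF m3] by (simp add: nk)
    qed
    thus "(\<lambda>m. A n m - (ln (real m) ^ n / fact n
               + euler_mascheroni * ln (real m) ^ (n - 1) / fact (n - 1)))
         \<in> O(\<lambda>m::nat. ln (real m) powr (real n - 2))"
      by (intro bigoI[where c=K]) (unfold eventually_at_top_linorder, blast)
  qed
qed

end
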